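(* Fix a partition $[n]=U\sqcup D$ into up and down indices. A join-irreducible element $\gamma$ of the weak order on $S_n$ avoids both $\bar{2}13$ and $13\underline{2}$ if and only if its associated subset is $A_{k,l}$ for some $1\le k\le l\le n-1$, where $A_{k,k}=[1,k]$ and, for $k<l$, writing $U_{k,l}=U\cap[k+1,l]$: $A_{k,l}=[1,k]\cup U_{k,l}\cup[l+1,n]$ if $k+1,l\in D$; $A_{k,l}=U_{k,l}\cup[l+1,n]$ if $k+1\in U$, $l\in D$; $A_{k,l}=[1,k]\cup U_{k,l}$ if $k+1\in D$, $l\in U$; and $A_{k,l}=U_{k,l}$ if $k+1,l\in U$.
   Context: $S_n$: permutations of $[n]$ in one-line notation $x_1\cdots x_n$; weak order $x\le y$ iff $I(x)\subseteq I(y)$, $I(x)=\{(x_j,x_i):i<j,x_i>x_j\}$. Join-irreducibles (elements covering exactly one element) correspond bijectively to subsets $A\subseteq[n]$ with $\max([n]\setminus A)>\min A$: the permutation lists $[n]\setminus A$ in increasing order followed by $A$ in increasing order; this $A$ is the associated subset. A permutation $x$ contains $\bar{2}13$ if there are $i<j<k$ with $x_j<x_i<x_k$ and $x_i\in U$; contains $13\underline{2}$ if there are $i<j<k$ with $x_i<x_k<x_j$ and $x_k\in D$; otherwise it avoids the pattern. *)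

theory Defs
  imports "HOL-Combinatorics.Combinatorics"
begin

text \<open>Permutations of [n] in one-line notation: x is a permutation of {1..n},
  x i is the entry at position i.\<close>

definition Sn :: "nat \<Rightarrow> (nat \<Rightarrow> nat) set" where
  "Sn n = {x. x permutes {1..n}}"

definition inv_set :: "nat \<Rightarrow> (nat \<Rightarrow> nat) \<Rightarrow> (nat \<times> nat) set" where
  "inv_set n x = {(x j, x i) | i j. 1 \<le> i \<and> i < j \<and> j \<le> n \<and> x i > x j}"

definition weak_le :: "nat \<Rightarrow> (nat \<Rightarrow> nat) \<Rightarrow> (nat \<Rightarrow> nat) \<Rightarrow> bool" where
  "weak_le n x y \<longleftrightarrow> inv_set n x \<subseteq> inv_set n y"

definition weak_covers :: "nat \<Rightarrow> (nat \<Rightarrow> nat) \<Rightarrow> (nat \<Rightarrow> nat) \<Rightarrow> bool" where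
  "weak_covers n y x \<longleftrightarrow> x \<in> Sn n \<and> y \<in> Sn n \<and> weak_le n x y \<and> x \<noteq> y \<and>
     (\<forall>z \<in> Sn n. weak_le n x z \<and> weak_le n z y \<longrightarrow> z = x \<or> z = y)"

definition join_irreducible :: "nat \<Rightarrow> (nat \<Rightarrow> nat) \<Rightarrow> bool" where
  "join_irreducible n y \<longleftrightarrow> y \<in> Sn n \<and> (\<exists>!x. weak_covers n y x)"

definition jirr_perm :: "nat \<Rightarrow> nat set \<Rightarrow> nat \<Rightarrow> nat" where
  "jirr_perm n A i = (if 1 \<le> i \<and> i \<le> n
     then (sorted_list_of_set ({1..n} - A) @ sorted_list_of_set A) ! (i - 1) else i)"

definition contains_bar213 :: "nat \<Rightarrow> nat set \<Rightarrow> (nat \<Rightarrow> nat) \<Rightarrow> bool" where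
  "contains_bar213 n U x \<longleftrightarrow> (\<exists>i j k. 1 \<le> i \<and> i < j \<and> j < k \<and> k \<le> n \<and>
      x j < x i \<and> x i < x k \<and> x i \<in> U)"

definition contains_132u :: "nat \<Rightarrow> nat set \<Rightarrow> (nat \<Rightarrow> nat) \<Rightarrow> bool" where
  "contains_132u n D x \<longleftrightarrow> (\<exists>i j k. 1 \<le> i \<and> i < j \<and> j < k \<and> k \<le> n \<and>
      x i < x k \<and> x k < x j \<and> x k \<in> D)"

definition A_kl :: "nat \<Rightarrow> nat set \<Rightarrow> nat \<Rightarrow> nat \<Rightarrow> nat set" where
  "A_kl n U k l =
    (if k = l then {1..k}
     else let Ukl = U \<inter> {k+1..l} in
       if k+1 \<notin> U \<and> l \<notin> U then {1..k} \<union> Ukl \<union> {l+1..n}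
       else if k+1 \<in> U \<and> l \<notin> U then Ukl \<union> {l+1..n}
       else if k+1 \<notin> U \<and> l \<in> U then {1..k} \<union> Ukl
       else Ukl)"

end

theory Submission imports Defs begin

lemma sls_facts:
  fixes S :: "nat set" assumes "finite S"
  shows "i < j \<Longrightarrow> j < card S \<Longrightarrow> sorted_list_of_set S ! i < sorted_list_of_set S ! j"
    and "i < card S \<Longrightarrow> sorted_list_of_set S ! i \<in> S"
    and "c \<in> S \<Longrightarrow> \<exists>i < card S. sorted_list_of_set S ! i = c"
proof -
  have L: "length (sorted_list_of_set S) = card S" by simp
  have st: "sorted_wrt (<) (sorted_list_of_set S)" using strict_sorted_list_of_set by blast
  show "i < j \<Longrightarrow> j < card S \<Longrightarrow> sorted_list_of_set S ! i < sorted_list_of_set S ! j"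
    using sorted_wrt_nth_less[OF st] L by metis
  show "i < card S \<Longrightarrow> sorted_list_of_set S ! i \<in> S"
    using nth_mem L set_sorted_list_of_set[OF assms] by metis
  show "c \<in> S \<Longrightarrow> \<exists>i < card S. sorted_list_of_set S ! i = c"
    using in_set_conv_nth L set_sorted_list_of_set[OF assms] by metis
qed

lemma jp_facts:
  assumes A: "A \<subseteq> {1..n}" and g: "g = jirr_perm n A" and p: "p = card ({1..n} - A)"
  shows "p + card A = n"
    and "1 \<le> i \<Longrightarrow> i \<le> p \<Longrightarrow> g i \<in> {1..n} - A"
    and "p < i \<Longrightarrow> i \<le> n \<Longrightarrow> g i \<in> A"
    and "1 \<le> i \<Longrightarrow> i < j \<Longrightarrow> j \<le> p \<Longrightarrow> g i < g j"
    and "p < i \<Longrightarrow> i < j \<Longrightarrow> j \<le> n \<Longrightarrow> g i < g j"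
    and "c \<in> {1..n} - A \<Longrightarrow> \<exists>i. 1 \<le> i \<and> i \<le> p \<and> g i = c"
    and "a \<in> A \<Longrightarrow> \<exists>i. p < i \<and> i \<le> n \<and> g i = a"
proof -
  let ?C = "{1..n} - A"
  let ?xs = "sorted_list_of_set ?C" and ?ys = "sorted_list_of_set A"
  have fC: "finite ?C" by simp
  have fA: "finite A" using A finite_subset by blast
  show pn: "p + card A = n" using A p
    by (metis card_Diff_subset card_atLeastAtMost diff_Suc_1 fA le_add_diff_inverse2 card_mono finite_atLeastAtMost)
  have lx: "length ?xs = p" using p by simp
  have ly: "length ?ys = card A" by simp
  have g1: "g i = ?xs ! (i - 1)" if "1 \<le> i" "i \<le> p" for i
    using that g lx pn unfolding jirr_perm_def by (simp add: nth_append)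
  have g2: "g i = ?ys ! (i - 1 - p)" if "p < i" "i \<le> n" for i
    using that g lx pn unfolding jirr_perm_def by (simp add: nth_append)
  show "1 \<le> i \<Longrightarrow> i \<le> p \<Longrightarrow> g i \<in> ?C"
    using g1 sls_facts(2)[OF fC] p by simp
  show "p < i \<Longrightarrow> i \<le> n \<Longrightarrow> g i \<in> A"
    using g2 sls_facts(2)[OF fA] pn by simp
  show "1 \<le> i \<Longrightarrow> i < j \<Longrightarrow> j \<le> p \<Longrightarrow> g i < g j"
    using g1 sls_facts(1)[OF fC, of "i-1" "j-1"] p by simp
  show "p < i \<Longrightarrow> i < j \<Longrightarrow> j \<le> n \<Longrightarrow> g i < g j"
    using g2 sls_facts(1)[OF fA, of "i-1-p" "j-1-p"] pn by simp
  show "c \<in> ?C \<Longrightarrow> \<exists>i. 1 \<le> i \<and> i \<le> p \<and> g i = c"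
  proof -
    assume "c \<in> ?C"
    then obtain i where "i < p" "?xs ! i = c" using sls_facts(3)[OF fC] p by blast
    then show ?thesis using g1[of "i+1"] by (intro exI[of _ "i+1"]) auto
  qed
  show "a \<in> A \<Longrightarrow> \<exists>i. p < i \<and> i \<le> n \<and> g i = a"
  proof -
    assume "a \<in> A"
    then obtain i where "i < card A" "?ys ! i = a" using sls_facts(3)[OF fA] by blast
    then show ?thesis using g2[of "i+1+p"] pn by (intro exI[of _ "i+1+p"]) auto
  qed
qed

lemma bar213_iff:
  assumes A: "A \<subseteq> {1..n}" and g: "g = jirr_perm n A"
  shows "contains_bar213 n U g \<longleftrightarrow>
    (\<exists>c a a'. c \<in> {1..n} - A \<and> c \<in> U \<and> a \<in> A \<and> a' \<in> A \<and> a < c \<and> c < a')"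
proof -
  define p where "p = card ({1..n} - A)"
  note F = jp_facts[OF A g p_def]
  show ?thesis
  proof
    assume "contains_bar213 n U g"
    then obtain i j k where h: "1 \<le> i" "i < j" "j < k" "k \<le> n" "g j < g i" "g i < g k" "g i \<in> U"
      unfolding contains_bar213_def by blast
    have ip: "i \<le> p"
    proof (rule ccontr)
      assume "\<not> i \<le> p" then show False using F(5)[of i j] h by simp
    qed
    have jp: "p < j"
    proof (rule ccontr)
      assume "\<not> p < j" then show False using F(4)[of i j] h by simp
    qed
    show "\<exists>c a a'. c \<in> {1..n} - A \<and> c \<in> U \<and> a \<in> A \<and> a' \<in> A \<and> a < c \<and> c < a'"
      using F(2)[of i] F(3)[of j] F(3)[of k] h ip jp by (intro exI[of _ "g i"] exI[of _ "g j"] exI[of _ "g k"]) auto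
  next
    assume "\<exists>c a a'. c \<in> {1..n} - A \<and> c \<in> U \<and> a \<in> A \<and> a' \<in> A \<and> a < c \<and> c < a'"
    then obtain c a a' where h: "c \<in> {1..n} - A" "c \<in> U" "a \<in> A" "a' \<in> A" "a < c" "c < a'" by blast
    obtain i where i: "1 \<le> i" "i \<le> p" "g i = c" using F(6) h by blast
    obtain j where j: "p < j" "j \<le> n" "g j = a" using F(7) h by blast
    obtain k where k: "p < k" "k \<le> n" "g k = a'" using F(7) h by blast
    have "j < k"
    proof (rule ccontr)
      assume "\<not> j < k"
      then have "k < j \<or> k = j" by auto
      then show False using F(5)[of k j] j k h by auto
    qed
    then show "contains_bar213 n U g" unfolding contains_bar213_def
      using i j k h by (intro exI[of _ i] exI[of _ j] exI[of _ k]) auto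
  qed
qed

lemma c132_iff:
  assumes A: "A \<subseteq> {1..n}" and g: "g = jirr_perm n A"
  shows "contains_132u n D g \<longleftrightarrow>
    (\<exists>c c' a. c \<in> {1..n} - A \<and> c' \<in> {1..n} - A \<and> a \<in> D \<and> a \<in> A \<and> c < a \<and> a < c')"
proof -
  define p where "p = card ({1..n} - A)"
  note F = jp_facts[OF A g p_def]
  show ?thesis
  proof
    assume "contains_132u n D g"
    then obtain i j k where h: "1 \<le> i" "i < j" "j < k" "k \<le> n" "g i < g k" "g k < g j" "g k \<in> D"
      unfolding contains_132u_def by blast
    have jp: "j \<le> p"
    proof (rule ccontr)
      assume "\<not> j \<le> p" then show False using F(5)[of j k] h by simp
    qed
    have kp: "p < k"
    proof (rule ccontr)
      assume "\<not> p < k" then show False using F(4)[of j k] h by simp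
    qed
    show "\<exists>c c' a. c \<in> {1..n} - A \<and> c' \<in> {1..n} - A \<and> a \<in> D \<and> a \<in> A \<and> c < a \<and> a < c'"
      using F(2)[of i] F(2)[of j] F(3)[of k] h jp kp by (intro exI[of _ "g i"] exI[of _ "g j"] exI[of _ "g k"]) auto
  next
    assume "\<exists>c c' a. c \<in> {1..n} - A \<and> c' \<in> {1..n} - A \<and> a \<in> D \<and> a \<in> A \<and> c < a \<and> a < c'"
    then obtain c c' a where h: "c \<in> {1..n} - A" "c' \<in> {1..n} - A" "a \<in> D" "a \<in> A" "c < a" "a < c'" by blast
    obtain i where i: "1 \<le> i" "i \<le> p" "g i = c" using F(6) h by blast
    obtain j where j: "1 \<le> j" "j \<le> p" "g j = c'" using F(6) h by blast
    obtain k where k: "p < k" "k \<le> n" "g k = a" using F(7) h by blast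
    have "i < j"
    proof (rule ccontr)
      assume "\<not> i < j"
      then have "j < i \<or> j = i" by auto
      then show False using F(4)[of j i] j i h by auto
    qed
    then show "contains_132u n D g" unfolding contains_132u_def
      using i j k h by (intro exI[of _ i] exI[of _ j] exI[of _ k]) auto
  qed
qed


lemma A_kl_mem:
  assumes "k < l"
  shows "v \<in> A_kl n U k l \<longleftrightarrow> (1 \<le> v \<and> v \<le> k \<and> k+1 \<notin> U) \<or> (k+1 \<le> v \<and> v \<le> l \<and> v \<in> U)
     \<or> (l+1 \<le> v \<and> v \<le> n \<and> l \<notin> U)"
  using assms unfolding A_kl_def Let_def by auto

lemma comb_rev:
  assumes "1 \<le> k" "k \<le> l" "l \<le> n - 1" "A = A_kl n U k l"
  shows "\<not> (\<exists>c a a'. c \<in> {1..n} - A \<and> c \<in> U \<and> a \<in> A \<and> a' \<in> A \<and> a < c \<and> c < a')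
       \<and> \<not> (\<exists>c c' a. c \<in> {1..n} - A \<and> c' \<in> {1..n} - A \<and> a \<notin> U \<and> a \<in> A \<and> c < a \<and> a < c')"
proof (cases "k = l")
  case True
  then have "A = {1..k}" using assms unfolding A_kl_def by simp
  then show ?thesis by auto
next
  case False
  then have kl: "k < l" using assms by simp
  note M = A_kl_mem[OF kl, of _ n U, folded assms(4)]
  show ?thesis
  proof (intro conjI notI)
    assume "\<exists>c a a'. c \<in> {1..n} - A \<and> c \<in> U \<and> a \<in> A \<and> a' \<in> A \<and> a < c \<and> c < a'"
    then obtain c a a' where h: "c \<in> {1..n} - A" "c \<in> U" "a \<in> A" "a' \<in> A" "a < c" "c < a'" by blast
    have hc: "\<not> ((1 \<le> c \<and> c \<le> k \<and> k+1 \<notin> U) \<or> (k+1 \<le> c \<and> c \<le> l \<and> c \<in> U)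
     \<or> (l+1 \<le> c \<and> c \<le> n \<and> l \<notin> U))" using h(1) M[of c] by blast
    have ha: "(1 \<le> a \<and> a \<le> k \<and> k+1 \<notin> U) \<or> (k+1 \<le> a \<and> a \<le> l \<and> a \<in> U)
     \<or> (l+1 \<le> a \<and> a \<le> n \<and> l \<notin> U)" using h(3) M[of a] by blast
    have ha': "(1 \<le> a' \<and> a' \<le> k \<and> k+1 \<notin> U) \<or> (k+1 \<le> a' \<and> a' \<le> l \<and> a' \<in> U)
     \<or> (l+1 \<le> a' \<and> a' \<le> n \<and> l \<notin> U)" using h(4) M[of a'] by blast
    have c1: "1 \<le> c" "c \<le> n" using h(1) by auto
    show False
    proof (cases "c \<le> k")
      case True
      then have "k+1 \<in> U" using hc c1 by blast
      then show False using ha True h(5) kl by linarith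
    next
      case F1: False
      show False
      proof (cases "c \<le> l")
        case True then show False using hc F1 h(2) by auto
      next
        case False
        then have "l \<in> U" using hc c1 by auto
        then show False using ha' False h(6) kl by linarith
      qed
    qed
  next
    assume "\<exists>c c' a. c \<in> {1..n} - A \<and> c' \<in> {1..n} - A \<and> a \<notin> U \<and> a \<in> A \<and> c < a \<and> a < c'"
    then obtain c c' a where h: "c \<in> {1..n} - A" "c' \<in> {1..n} - A" "a \<notin> U" "a \<in> A" "c < a" "a < c'" by blast
    have hc: "\<not> ((1 \<le> c \<and> c \<le> k \<and> k+1 \<notin> U) \<or> (k+1 \<le> c \<and> c \<le> l \<and> c \<in> U)
     \<or> (l+1 \<le> c \<and> c \<le> n \<and> l \<notin> U))" using h(1) M[of c] by blast
    have hc': "\<not> ((1 \<le> c' \<and> c' \<le> k \<and> k+1 \<notin> U) \<or> (k+1 \<le> c' \<and> c' \<le> l \<and> c' \<in> U)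
     \<or> (l+1 \<le> c' \<and> c' \<le> n \<and> l \<notin> U))" using h(2) M[of c'] by blast
    have ha: "(1 \<le> a \<and> a \<le> k \<and> k+1 \<notin> U) \<or> (k+1 \<le> a \<and> a \<le> l \<and> a \<in> U)
     \<or> (l+1 \<le> a \<and> a \<le> n \<and> l \<notin> U)" using h(4) M[of a] by blast
    have c1: "1 \<le> c" "c \<le> n" "1 \<le> c'" "c' \<le> n" using h(1,2) by auto
    show False
    proof (cases "a \<le> k")
      case True
      then have "k+1 \<notin> U" using ha kl by linarith
      then show False using hc c1 True h(5) kl by linarith
    next
      case F1: False
      show False
      proof (cases "a \<le> l")
        case True then show False using ha F1 h(3) by auto
      next
        case False
        then have "l \<notin> U" using ha kl by linarith
        then show False using hc' c1 False h(6) kl by linarith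
      qed
    qed
  qed
qed

lemma comb_fwd:
  fixes A :: "nat set"
  assumes A: "A \<subseteq> {1..n}" and ne: "A \<noteq> {}" and neC: "{1..n} - A \<noteq> {}"
    and mM: "Max ({1..n} - A) > Min A"
    and nP1: "\<not> (\<exists>c a a'. c \<in> {1..n} - A \<and> c \<in> U \<and> a \<in> A \<and> a' \<in> A \<and> a < c \<and> c < a')"
    and nP2: "\<not> (\<exists>c c' a. c \<in> {1..n} - A \<and> c' \<in> {1..n} - A \<and> a \<notin> U \<and> a \<in> A \<and> c < a \<and> a < c')"
  shows "\<exists>k l. 1 \<le> k \<and> k \<le> l \<and> l \<le> n - 1 \<and> A = A_kl n U k l"
proof -
  define C where "C = {1..n} - A"
  have fA: "finite A" using A finite_subset by blast
  have fC: "finite C" unfolding C_def by simp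
  have CA: "\<And>v. 1 \<le> v \<Longrightarrow> v \<le> n \<Longrightarrow> v \<in> C \<longleftrightarrow> v \<notin> A" unfolding C_def by auto
  have An: "\<And>v. v \<in> A \<Longrightarrow> 1 \<le> v \<and> v \<le> n" using A by auto
  have Cn: "\<And>v. v \<in> C \<Longrightarrow> 1 \<le> v \<and> v \<le> n \<and> v \<notin> A" unfolding C_def by auto
  have neC': "C \<noteq> {}" using neC C_def by simp
  have minA: "Min A \<in> A" "\<And>a. a \<in> A \<Longrightarrow> Min A \<le> a" using fA ne by auto
  have minC: "Min C \<in> C" "\<And>a. a \<in> C \<Longrightarrow> Min C \<le> a" using fC neC' by auto
  have maxA: "Max A \<in> A" "\<And>a. a \<in> A \<Longrightarrow> a \<le> Max A" using fA ne by auto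
  have maxC: "Max C \<in> C" "\<And>a. a \<in> C \<Longrightarrow> a \<le> Max C" using fC neC' by auto
  have mM': "Min A < Max C" using mM C_def by simp
  have n1: "1 \<le> n" using minA An by fastforce
  define b1 where "b1 = (1 \<in> A)"
  define b2 where "b2 = (n \<in> A)"
  define k where "k = (if b1 then Min C - 1 else Min A - 1)"
  define l where "l = (if b2 then Max C else Max A)"
  have K1: "1 \<le> k"
  proof (cases b1)
    case True
    then have "Min C \<noteq> 1" using minC Cn b1_def by metis
    then show ?thesis using True k_def minC Cn by fastforce
  next
    case False
    then have "Min A \<noteq> 1" using minA b1_def by metis
    then show ?thesis using False k_def minA An by fastforce
  qed
  have K2: "1 \<le> k+1 \<and> k+1 \<le> n \<and> (k+1 \<in> A \<longleftrightarrow> \<not> b1)"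
    using K1 k_def minC Cn minA An by (cases b1) auto
  have K3: "\<And>v. 1 \<le> v \<Longrightarrow> v \<le> k \<Longrightarrow> (v \<in> A \<longleftrightarrow> b1)"
  proof -
    fix v assume v: "1 \<le> v" "v \<le> k"
    show "v \<in> A \<longleftrightarrow> b1"
    proof (cases b1)
      case True
      then have "v < Min C" using v k_def K1 by auto
      then have "v \<notin> C" using minC by force
      moreover have "v \<le> n" using v K2 by linarith
      ultimately show ?thesis using True CA v by blast
    next
      case False
      then have "v < Min A" using v k_def K1 by auto
      then show ?thesis using minA False by force
    qed
  qed
  have L1: "l \<le> n - 1"
  proof (cases b2)
    case True
    then have "Max C \<noteq> n" using maxC Cn b2_def by metis
    then show ?thesis using True l_def maxC Cn by fastforce
  next
    case False
    then have "Max A \<noteq> n" using maxA b2_def by metis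
    then show ?thesis using False l_def maxA An by fastforce
  qed
  have L2: "1 \<le> l \<and> l \<le> n \<and> (l \<in> A \<longleftrightarrow> \<not> b2)"
    using l_def maxC Cn maxA An by (cases b2) auto
  have L3: "\<And>v. l+1 \<le> v \<Longrightarrow> v \<le> n \<Longrightarrow> (v \<in> A \<longleftrightarrow> b2)"
  proof -
    fix v assume v: "l+1 \<le> v" "v \<le> n"
    show "v \<in> A \<longleftrightarrow> b2"
    proof (cases b2)
      case True
      then have "v > Max C" using v l_def by auto
      then have "v \<notin> C" using maxC by force
      moreover have "1 \<le> v" using v by linarith
      ultimately show ?thesis using True CA v by blast
    next
      case False
      then have "v > Max A" using v l_def by auto
      then show ?thesis using maxA False by force
    qed
  qed
  have same: False if "b1 = b2" "\<And>v. 1 \<le> v \<Longrightarrow> v \<le> n \<Longrightarrow> v \<le> k \<or> l+1 \<le> v"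
  proof -
    have all: "\<And>v. 1 \<le> v \<Longrightarrow> v \<le> n \<Longrightarrow> (v \<in> A \<longleftrightarrow> b1)"
      using that K3 L3 by metis
    show False
    proof (cases b1)
      case True
      then show False using all minC Cn by blast
    next
      case False
      then show False using all minA An by blast
    qed
  qed
  have kl: "k \<le> l"
  proof (rule ccontr)
    assume "\<not> k \<le> l"
    then have "l + 1 \<le> k" by simp
    then have "b1 = b2" using K3[of k] L3[of k] K1 K2 by linarith
    then show False using same \<open>l + 1 \<le> k\<close> by fastforce
  qed
  show ?thesis
  proof (cases "k = l")
    case True
    have nb: "b1 \<noteq> b2" using same True by fastforce
    have b1 
    proof (rule ccontr)
      assume "\<not> b1"
      then have b2 using nb by simp
      have "Min A > k" using minA An K3 \<open>\<not> b1\<close> by (meson not_le)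
      moreover have "Max C \<le> k"
      proof (rule ccontr)
        assume "\<not> Max C \<le> k"
        then have "l+1 \<le> Max C" using True by simp
        then show False using maxC(1) Cn L3[of "Max C"] \<open>b2\<close> by auto
      qed
      ultimately show False using mM' by simp
    qed
    then have "\<not> b2" using nb by simp
    have "A = {1..k}"
    proof
      show "A \<subseteq> {1..k}"
      proof
        fix v assume "v \<in> A"
        moreover have "\<not> (l+1 \<le> v \<and> v \<le> n)" using L3[of v] \<open>\<not> b2\<close> \<open>v \<in> A\<close> by blast
        ultimately show "v \<in> {1..k}" using An[of v] True by auto
      qed
      show "{1..k} \<subseteq> A" using K3 \<open>b1\<close> by auto
    qed
    then have "A = A_kl n U k l" using True unfolding A_kl_def by simp
    then show ?thesis using K1 kl L1 by blast
  next
    case False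
    then have klt: "k < l" using kl by simp
    have U1: "k+1 \<in> U \<longleftrightarrow> \<not> b1"
    proof (cases b1)
      case False
      have "k + 1 = Min A" using False k_def K1 by simp
      have "1 \<in> C" using False b1_def CA n1 by simp
      moreover have "1 < k+1" "k+1 < Max C" using K1 mM' \<open>k + 1 = Min A\<close> by auto
      moreover have "k+1 \<in> A" using K2 False by simp
      ultimately have "k+1 \<in> U" using nP2 maxC(1) unfolding C_def by blast
      then show ?thesis using False by simp
    next
      case True
      have "\<exists>a'. a' \<in> A \<and> k+1 < a'"
      proof (cases b2)
        case True then show ?thesis using b2_def L2 klt L1 by (intro exI[of _ n]) auto
      next
        case False then show ?thesis using l_def L2 klt K2 \<open>b1\<close> by (intro exI[of _ l]) (auto simp: le_less intro!: Suc_lessI)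
      qed
      then obtain a' where "a' \<in> A" "k+1 < a'" by blast
      then have "k+1 \<notin> U" using nP1 True b1_def K2 K1 unfolding C_def by fastforce
      then show ?thesis using True by simp
    qed
    have U2: "l \<in> U \<longleftrightarrow> \<not> b2"
    proof (cases b2)
      case False
      have "\<exists>c. c \<in> C \<and> c < l"
      proof (cases b1)
        case False then show ?thesis using b1_def CA klt K1 n1 by (intro exI[of _ 1]) auto
      next
        case True then show ?thesis using K2 CA klt L2 \<open>\<not> b2\<close> by (intro exI[of _ "k+1"]) (auto simp: le_less intro!: Suc_lessI)
      qed
      then obtain c where "c \<in> C" "c < l" by blast
      moreover have "n \<in> C" "l < n" using False b2_def CA n1 L1 L2 by auto
      ultimately have "l \<in> U" using nP2 L2 False unfolding C_def by blast
      then show ?thesis using False by simp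
    next
      case True
      have "l = Max C" using True l_def by simp
      have "n \<in> A" "l < n" using True b2_def L1 n1 by auto
      moreover have "l \<in> C" "Min A < l" using \<open>l = Max C\<close> maxC(1) mM' by auto
      ultimately have "l \<notin> U" using nP1 minA(1) unfolding C_def by blast
      then show ?thesis using True by simp
    qed
    have MID: "\<And>v. k+1 \<le> v \<Longrightarrow> v \<le> l \<Longrightarrow> (v \<in> A \<longleftrightarrow> v \<in> U)"
    proof -
      fix v assume v: "k+1 \<le> v" "v \<le> l"
      show "v \<in> A \<longleftrightarrow> v \<in> U"
      proof
        assume vA: "v \<in> A"
        have "\<exists>c. c \<in> C \<and> c < v"
        proof (cases b1)
          case False then show ?thesis using b1_def CA v K1 n1 by (intro exI[of _ 1]) auto
        next
          case True then show ?thesis using K2 CA v vA by (intro exI[of _ "k+1"]) (auto simp: le_less intro!: Suc_lessI)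
        qed
        then obtain c where c: "c \<in> C" "c < v" by blast
        have "\<exists>c. c \<in> C \<and> v < c"
        proof (cases b2)
          case False then show ?thesis using b2_def CA v L1 L2 n1 by (intro exI[of _ n]) auto
        next
          case True then show ?thesis using L2 CA v vA by (intro exI[of _ l]) (auto simp: le_less intro!: Suc_lessI)
        qed
        then obtain c' where c': "c' \<in> C" "v < c'" by blast
        show "v \<in> U" using nP2 c c' vA unfolding C_def by blast
      next
        assume vU: "v \<in> U"
        show "v \<in> A"
        proof (rule ccontr)
          assume vA: "v \<notin> A"
          have vC: "v \<in> C" using CA vA v K1 L2 by simp
          have "\<exists>a. a \<in> A \<and> a < v"
          proof (cases b1)
            case True then show ?thesis using b1_def v K1 by (intro exI[of _ 1]) auto
          next
            case False then show ?thesis using K2 v vA by (intro exI[of _ "k+1"]) (auto simp: le_less intro!: Suc_lessI)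
          qed
          then obtain a where a: "a \<in> A" "a < v" by blast
          have "\<exists>a. a \<in> A \<and> v < a"
          proof (cases b2)
            case True then show ?thesis using b2_def v L1 by (intro exI[of _ n]) auto
          next
            case False then show ?thesis using L2 v vA by (intro exI[of _ l]) (auto simp: le_less intro!: Suc_lessI)
          qed
          then obtain a' where a': "a' \<in> A" "v < a'" by blast
          show False using nP1 a a' vC vU unfolding C_def by blast
        qed
      qed
    qed
    have "A = A_kl n U k l"
    proof (rule set_eqI)
      fix v
      show "v \<in> A \<longleftrightarrow> v \<in> A_kl n U k l"
      proof (cases "1 \<le> v \<and> v \<le> n")
        case False
        then have "v \<notin> A" using An by blast
        moreover have "v \<notin> A_kl n U k l" unfolding A_kl_mem[OF klt] using False L1 klt by auto
        ultimately show ?thesis by blast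
      next
        case True
        then consider "v \<le> k" | "k+1 \<le> v \<and> v \<le> l" | "l+1 \<le> v" by linarith
        then show ?thesis
        proof cases
          case 1
          have e1: "v \<in> A \<longleftrightarrow> b1" using K3[of v] True 1 by blast
          have e2: "v \<in> A_kl n U k l \<longleftrightarrow> k+1 \<notin> U" unfolding A_kl_mem[OF klt] using True 1 klt by auto
          show ?thesis using e1 e2 U1 by blast
        next
          case 2
          have e1: "v \<in> A \<longleftrightarrow> v \<in> U" using MID[of v] 2 by blast
          have e2: "v \<in> A_kl n U k l \<longleftrightarrow> v \<in> U" unfolding A_kl_mem[OF klt] using True 2 klt by auto
          show ?thesis using e1 e2 by blast
        next
          case 3
          have e1: "v \<in> A \<longleftrightarrow> b2" using L3[of v] True 3 by blast
          have e2: "v \<in> A_kl n U k l \<longleftrightarrow> l \<notin> U" unfolding A_kl_mem[OF klt] using True 3 klt by auto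
          show ?thesis using e1 e2 U2 by blast
        qed
      qed
    qed
    then show ?thesis using K1 kl L1 by blast
  qed
qed

theorem proposition9p3:
  fixes n :: nat and U D :: "nat set" and \<gamma> :: "nat \<Rightarrow> nat" and A :: "nat set"
  assumes "U \<union> D = {1..n}" and "U \<inter> D = {}"
    and "join_irreducible n \<gamma>"
    and "A \<subseteq> {1..n}" and "A \<noteq> {}" and "{1..n} - A \<noteq> {}"
    and "Max ({1..n} - A) > Min A"
    and "\<gamma> = jirr_perm n A"
  shows "(\<not> contains_bar213 n U \<gamma> \<and> \<not> contains_132u n D \<gamma>) \<longleftrightarrow>
         (\<exists>k l. 1 \<le> k \<and> k \<le> l \<and> l \<le> n - 1 \<and> A = A_kl n U k l)"
proof -
  define P1 where "P1 = (\<exists>c a a'. c \<in> {1..n} - A \<and> c \<in> U \<and> a \<in> A \<and> a' \<in> A \<and> a < c \<and> c < a')"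
  define P2 where "P2 = (\<exists>c c' a. c \<in> {1..n} - A \<and> c' \<in> {1..n} - A \<and> a \<notin> U \<and> a \<in> A \<and> c < a \<and> a < c')"
  have DU: "\<And>a. a \<in> A \<Longrightarrow> a \<in> D \<longleftrightarrow> a \<notin> U" using assms(1,2,4) by blast
  have e2: "contains_132u n D \<gamma> \<longleftrightarrow> P2"
    unfolding c132_iff[OF assms(4,8)] P2_def using DU by blast
  have e1: "contains_bar213 n U \<gamma> \<longleftrightarrow> P1"
    unfolding bar213_iff[OF assms(4,8)] P1_def by (rule refl)
  show ?thesis
  proof
    assume "\<not> contains_bar213 n U \<gamma> \<and> \<not> contains_132u n D \<gamma>"
    then have "\<not> P1" "\<not> P2" using e1 e2 by simp_all
    then show "\<exists>k l. 1 \<le> k \<and> k \<le> l \<and> l \<le> n - 1 \<and> A = A_kl n U k l"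
      using comb_fwd[OF assms(4,5,6,7)] unfolding P1_def P2_def by blast
  next
    assume "\<exists>k l. 1 \<le> k \<and> k \<le> l \<and> l \<le> n - 1 \<and> A = A_kl n U k l"
    then obtain k l where "1 \<le> k" "k \<le> l" "l \<le> n - 1" "A = A_kl n U k l" by blast
    from comb_rev[OF this] have "\<not> P1" "\<not> P2" unfolding P1_def P2_def by blast+
    then show "\<not> contains_bar213 n U \<gamma> \<and> \<not> contains_132u n D \<gamma>"
      using e1 e2 by simp
  qed
qed

end
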